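(* Let $\Omega\subset\mathbb{R}^n$ ($n\ge1$) be a bounded domain, $T>0$, $\delta\in(0,1)\cup(1,2)$, $\bar Q:=\bar\Omega\times[0,T]$ and $Q:=\Omega\times(0,T]$. Let $u$ be a classical solution of the initial-boundary value problem described in the context. Assume that $\partial^{\bar\delta}u(x,t)/\partial t^{\bar\delta}$ is continuous on $\bar Q$. Then \[ \lim_{t\to0^+} D_t^\delta u(x,t)=0\quad\text{for each } x\in\Omega . \]
   Context: Set $\bar\delta=1$ if $0<\delta<1$ and $\bar\delta=2$ if $1<\delta<2$. The Caputo fractional derivative is \[ D_t^\delta g(x,t):=\frac{1}{\Gamma(\bar\delta-\delta)}\int_0^t (t-s)^{\bar\delta-\delta-1}\,\frac{\partial^{\bar\delta}g(x,s)}{\partial s^{\bar\delta}}\,ds,\qquad x\in\Omega,\ 0<t\le T. \] The problem is: $D_t^\delta u-\sum_{i,j=1}^n p_{ij}(x,t)\,\partial^2u/\partial x_i\partial x_j+\sum_{i=1}^n q_i(x,t)\,\partial u/\partial x_i+r(x,t)u=f(x,t)$ for $(x,t)\in Q$; $u(x,t)=\psi(x,t)$ for $(x,t)\in\partial\Omega\times(0,T]$; $u(x,0)=\phi_0(x)$ for $x\in\bar\Omega$; and, only when $1<\delta<2$, $u_t(x,0)=\phi_1(x)$ for $x\in\Omega$. The spatial operator $w\mapsto\sum p_{ij}\partial^2w/\partial x_i\partial x_j+\sum q_i\partial w/\partial x_i+rw$ is uniformly elliptic on $Q$; $p_{ij},q_i,r,\psi,\phi_0,\phi_1$ are continuous on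 the closures of their domains; and $\phi_0(x)=\psi(x,0)$ for all $x\in\partial\Omega$. A classical solution is a function $u$ continuous on $\bar Q$ for which $D_t^\delta u$, $\partial u/\partial x_i$, $\partial^2u/\partial x_i\partial x_j$ exist at every point of $Q$ and the equation and the initial and boundary conditions hold pointwise. *)

theory Defs
  imports "HOL-Analysis.Analysis"
begin

definition delta_bar :: "real \<Rightarrow> nat" where
  "delta_bar \<delta> = (if \<delta> < 1 then 1 else 2)"

definition tder :: "nat \<Rightarrow> (real \<Rightarrow> real) \<Rightarrow> real \<Rightarrow> real" where
  "tder k g s = (deriv ^^ k) g s"

definition tder_exists :: "nat \<Rightarrow> (real \<Rightarrow> real) \<Rightarrow> real \<Rightarrow> bool" where
  "tder_exists k g s =
     (if k = 1 then g differentiable (at s)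
      else (\<forall>\<^sub>F r in nhds s. g differentiable (at r)) \<and> deriv g differentiable (at s))"

definition caputo :: "real \<Rightarrow> ('x \<Rightarrow> real \<Rightarrow> real) \<Rightarrow> 'x \<Rightarrow> real \<Rightarrow> real" where
  "caputo \<delta> u x t =
     (1 / Gamma (real (delta_bar \<delta>) - \<delta>)) *
     integral {0..t} (\<lambda>s. (t - s) powr (real (delta_bar \<delta>) - \<delta> - 1) * tder (delta_bar \<delta>) (u x) s)"

definition caputo_exists :: "real \<Rightarrow> ('x \<Rightarrow> real \<Rightarrow> real) \<Rightarrow> 'x \<Rightarrow> real \<Rightarrow> bool" where
  "caputo_exists \<delta> u x t =
     ((\<forall>s\<in>{0<..<t}. tder_exists (delta_bar \<delta>) (u x) s) \<and>
      (\<lambda>s. (t - s) powr (real (delta_bar \<delta>) - \<delta> - 1) * tder (delta_bar \<delta>) (u x) s) integrable_on {0..t})"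

definition pdx :: "'n::finite \<Rightarrow> (real^'n \<Rightarrow> real) \<Rightarrow> real^'n \<Rightarrow> real" where
  "pdx i w x = deriv (\<lambda>h. w (x + h *\<^sub>R axis i 1)) 0"

definition pdx_exists :: "'n::finite \<Rightarrow> (real^'n \<Rightarrow> real) \<Rightarrow> real^'n \<Rightarrow> bool" where
  "pdx_exists i w x = ((\<lambda>h. w (x + h *\<^sub>R axis i 1)) differentiable (at 0))"

definition pdx2_exists :: "'n::finite \<Rightarrow> 'n \<Rightarrow> (real^'n \<Rightarrow> real) \<Rightarrow> real^'n \<Rightarrow> bool" where
  "pdx2_exists i j w x = ((\<forall>\<^sub>F y in nhds x. pdx_exists j w y) \<and> pdx_exists i (pdx j w) x)"

definition classical_solution ::
  "(real^'n::finite) set \<Rightarrow> real \<Rightarrow> real \<Rightarrow>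
   ('n \<Rightarrow> 'n \<Rightarrow> real^'n \<Rightarrow> real \<Rightarrow> real) \<Rightarrow> ('n \<Rightarrow> real^'n \<Rightarrow> real \<Rightarrow> real) \<Rightarrow>
   (real^'n \<Rightarrow> real \<Rightarrow> real) \<Rightarrow> (real^'n \<Rightarrow> real \<Rightarrow> real) \<Rightarrow> (real^'n \<Rightarrow> real \<Rightarrow> real) \<Rightarrow>
   (real^'n \<Rightarrow> real) \<Rightarrow> (real^'n \<Rightarrow> real) \<Rightarrow> (real^'n \<Rightarrow> real \<Rightarrow> real) \<Rightarrow> bool" where
  "classical_solution \<Omega> T \<delta> p q r f \<psi> \<phi>0 \<phi>1 u =
    (continuous_on (closure \<Omega> \<times> {0..T}) (\<lambda>(x, t). u x t) \<and>
     (\<forall>x\<in>\<Omega>. \<forall>t\<in>{0<..T}.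
        caputo_exists \<delta> u x t \<and>
        (\<forall>i. pdx_exists i (\<lambda>y. u y t) x) \<and>
        (\<forall>i j. pdx2_exists i j (\<lambda>y. u y t) x) \<and>
        caputo \<delta> u x t
          - (\<Sum>i\<in>UNIV. \<Sum>j\<in>UNIV. p i j x t * pdx i (pdx j (\<lambda>y. u y t)) x)
          + (\<Sum>i\<in>UNIV. q i x t * pdx i (\<lambda>y. u y t) x)
          + r x t * u x t = f x t) \<and>
     (\<forall>x\<in>frontier \<Omega>. \<forall>t\<in>{0<..T}. u x t = \<psi> x t) \<and>
     (\<forall>x\<in>closure \<Omega>. u x 0 = \<phi>0 x) \<and>
     (1 < \<delta> \<longrightarrow> (\<forall>x\<in>\<Omega>. ((\<lambda>s. u x s) has_real_derivative \<phi>1 x) (at 0 within {0..T}))))"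

definition uniformly_elliptic ::
  "(real^'n::finite) set \<Rightarrow> real \<Rightarrow> ('n \<Rightarrow> 'n \<Rightarrow> real^'n \<Rightarrow> real \<Rightarrow> real) \<Rightarrow> bool" where
  "uniformly_elliptic \<Omega> T p =
    (\<exists>lam>0. \<forall>x\<in>\<Omega>. \<forall>t\<in>{0<..T}. \<forall>\<xi>::real^'n.
        (\<Sum>i\<in>UNIV. \<Sum>j\<in>UNIV. p i j x t * \<xi>$i * \<xi>$j) \<ge> lam * (norm \<xi>)\<^sup>2)"

end

theory Submission
  imports Defs
begin

lemma powr_int:
  fixes t e :: real assumes "e > -1" "t \<ge> 0"
  shows "((\<lambda>s. (t - s) powr e) has_integral (t powr (e+1) / (e+1))) {0..t}"
proof -
  have "((\<lambda>x. x powr e) has_integral (t powr (e+1) / (e+1))) (cbox 0 t)"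
    using has_integral_powr_from_0[OF assms] by simp
  from has_integral_affinity[OF this, of "-1" t]
  have "((\<lambda>x. (-1 *\<^sub>R x + t) powr e) has_integral (t powr (e+1) / (e+1))) ((\<lambda>x. (1 / -1) *\<^sub>R x + -((1 / -1) *\<^sub>R t)) ` cbox 0 t)"
    by simp
  moreover have "((\<lambda>x. (1 / -1) *\<^sub>R x + -((1 / -1) *\<^sub>R t)) ` cbox 0 t) = {0..t}"
  proof -
    have "(\<lambda>x::real. t - x) ` {0..t} = {0..t}"
      by (auto simp: image_iff intro!: bexI[where x="t - _"])
    then show ?thesis by simp
  qed
  ultimately show ?thesis by simp
qed

theorem corollary2p2:
  fixes \<Omega> :: "(real^'n::finite) set" and T \<delta> :: real
    and p :: "'n \<Rightarrow> 'n \<Rightarrow> real^'n \<Rightarrow> real \<Rightarrow> real" and q :: "'n \<Rightarrow> real^'n \<Rightarrow> real \<Rightarrow> real"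
    and r f \<psi> u :: "real^'n \<Rightarrow> real \<Rightarrow> real" and \<phi>0 \<phi>1 :: "real^'n \<Rightarrow> real"
  assumes dom: "open \<Omega>" "connected \<Omega>" "bounded \<Omega>" "\<Omega> \<noteq> {}"
    and T: "T > 0"
    and delta: "(0 < \<delta> \<and> \<delta> < 1) \<or> (1 < \<delta> \<and> \<delta> < 2)"
    and ell: "uniformly_elliptic \<Omega> T p"
    and cont_p: "\<And>i j. continuous_on (closure \<Omega> \<times> {0..T}) (\<lambda>(x, t). p i j x t)"
    and cont_q: "\<And>i. continuous_on (closure \<Omega> \<times> {0..T}) (\<lambda>(x, t). q i x t)"
    and cont_r: "continuous_on (closure \<Omega> \<times> {0..T}) (\<lambda>(x, t). r x t)"
    and cont_psi: "continuous_on (frontier \<Omega> \<times> {0..T}) (\<lambda>(x, t). \<psi> x t)"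
    and cont_phi0: "continuous_on (closure \<Omega>) \<phi>0"
    and cont_phi1: "1 < \<delta> \<Longrightarrow> continuous_on (closure \<Omega>) \<phi>1"
    and compat: "\<And>x. x \<in> frontier \<Omega> \<Longrightarrow> \<phi>0 x = \<psi> x 0"
    and sol: "classical_solution \<Omega> T \<delta> p q r f \<psi> \<phi>0 \<phi>1 u"
    and cont_dt: "\<exists>v. continuous_on (closure \<Omega> \<times> {0..T}) v \<and>
                      (\<forall>x\<in>\<Omega>. \<forall>t\<in>{0<..<T}. v (x, t) = tder (delta_bar \<delta>) (u x) t)"
  shows "\<forall>x\<in>\<Omega>. ((\<lambda>t. caputo \<delta> u x t) \<longlongrightarrow> 0) (at_right 0)"
proof
  fix x assume xO: "x \<in> \<Omega>"
  obtain v where vc: "continuous_on (closure \<Omega> \<times> {0..T}) v"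
    and veq: "\<forall>x\<in>\<Omega>. \<forall>t\<in>{0<..<T}. v (x, t) = tder (delta_bar \<delta>) (u x) t"
    using cont_dt by blast
  have "compact (closure \<Omega> \<times> {0..T})"
    using dom(3) by (intro compact_Times) (auto simp: compact_closure)
  then have "bounded (v ` (closure \<Omega> \<times> {0..T}))"
    using vc compact_continuous_image compact_imp_bounded by blast
  then obtain M where M: "\<And>y. y \<in> closure \<Omega> \<times> {0..T} \<Longrightarrow> norm (v y) \<le> M"
    by (auto simp: bounded_iff)
  define a where "a = real (delta_bar \<delta>) - \<delta>"
  have a: "0 < a" "a < 1" using delta by (auto simp: a_def delta_bar_def)
  have sol': "\<forall>t\<in>{0<..T}. caputo_exists \<delta> u x t"
    using sol xO by (auto simp: classical_solution_def)
  have bnd: "norm (caputo \<delta> u x t) \<le> (1 / Gamma a) * (M * (t powr a / a))"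
    if t: "0 < t" "t < T" for t
  proof -
    let ?h = "\<lambda>s. (t - s) powr (a - 1) * tder (delta_bar \<delta>) (u x) s"
    have hint: "?h integrable_on {0..t}"
      using sol' t by (auto simp: caputo_exists_def a_def)
    have gI: "((\<lambda>s. M * (t - s) powr (a - 1)) has_integral M * (t powr a / a)) {0..t}"
      using has_integral_mult_right[OF powr_int[of "a - 1" t]] a t by simp
    have "norm (integral {0..t} ?h) = norm (integral {0<..<t} ?h)"
      by (simp add: integral_open_interval_real)
    also have "\<dots> \<le> integral {0<..<t} (\<lambda>s. M * (t - s) powr (a - 1))"
    proof (rule integral_norm_bound_integral)
      show "?h integrable_on {0<..<t}" using hint integrable_on_open_interval_real by blast
      show "(\<lambda>s. M * (t - s) powr (a - 1)) integrable_on {0<..<t}"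
        using gI integrable_on_open_interval_real has_integral_integrable by blast
      fix s assume s: "s \<in> {0<..<t}"
      then have "tder (delta_bar \<delta>) (u x) s = v (x, s)" using veq xO t by auto
      moreover have "norm (v (x, s)) \<le> M"
        using M[of "(x, s)"] xO s t closure_subset by auto
      ultimately show "norm (?h s) \<le> M * (t - s) powr (a - 1)"
        by (simp add: abs_mult mult.commute[of "(t - s) powr (a - 1)"] mult_right_mono)
    qed
    also have "\<dots> = M * (t powr a / a)"
      using gI integral_unique has_integral_Icc_iff_Ioo by blast
    finally have "norm (integral {0..t} ?h) \<le> M * (t powr a / a)" .
    moreover have "Gamma a > 0" using a Gamma_real_pos by auto
    ultimately have "norm (integral {0..t} ?h) / Gamma a \<le> M * (t powr a / a) / Gamma a"
      by (intro divide_right_mono) auto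
    moreover have "caputo \<delta> u x t = (1 / Gamma a) * integral {0..t} ?h"
      unfolding caputo_def a_def by simp
    moreover have "(1 / Gamma a) * (M * (t powr a / a)) = M * (t powr a / a) / Gamma a"
      by simp
    ultimately show ?thesis using \<open>Gamma a > 0\<close>
      by (simp only: norm_mult norm_divide) simp
  qed
  have p0: "((\<lambda>t::real. t powr a) \<longlongrightarrow> 0) (at_right 0)"
    by (rule tendsto_zero_powrI) (use a in \<open>auto simp: eventually_at_right_field intro!: exI[of _ 1] tendsto_ident_at\<close>)
  have lim: "((\<lambda>t. (1 / Gamma a) * (M * (t powr a / a))) \<longlongrightarrow> (1 / Gamma a) * (M * (0 / a))) (at_right 0)"
    by (intro tendsto_mult tendsto_const tendsto_divide p0) (use a in auto)
  show "((\<lambda>t. caputo \<delta> u x t) \<longlongrightarrow> 0) (at_right 0)"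
  proof (rule Lim_null_comparison)
    show "\<forall>\<^sub>F t in at_right 0. norm (caputo \<delta> u x t) \<le> (1 / Gamma a) * (M * (t powr a / a))"
      using T unfolding eventually_at_right_field by (intro exI[of _ T]) (use bnd in blast)
    show "((\<lambda>t. (1 / Gamma a) * (M * (t powr a / a))) \<longlongrightarrow> 0) (at_right 0)"
      using lim by simp
  qed
qed

end
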